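(* Let $(X,\delta)$ be a metric space, $O\in X$ a depot, and $\ell(y)=\delta(O,y)$ for $y\in X$. Let $\lambda,\epsilon>0$ with $\lambda+\epsilon<1$. Let $T=(O,y_1,y_2,\dots,y_m,O)$ be a tour with $m\ge 1$ distinct points $y_1,\dots,y_m\in X$, let $L=\frac1m\sum_{j=1}^m\ell(y_j)$ and $\Delta=\max_{1\le j\le m}\ell(y_j)-L$. Then there exists a set $W\subseteq\{y_1,\dots,y_m\}$ with $|W|>(\lambda+\epsilon)m-1$ such that $$\mathrm{cost}(T)\ \ge\ 2\Big(L-\frac{\lambda+\epsilon}{1-\lambda-\epsilon}\,\Delta\Big)+\sum_{x\in W}\delta\big(x,W\setminus\{x\}\big).$$
   Context: $\mathrm{cost}(T)=\delta(O,y_1)+\sum_{j=1}^{m-1}\delta(y_j,y_{j+1})+\delta(y_m,O)$. For a point $x$ and a set $A$, $\delta(x,A)=\min_{a\in A}\delta(x,a)$, with the convention $\delta(x,\emptyset)=0$. *)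

theory Defs
  imports "HOL-Analysis.Analysis"
begin

definition dist_set :: "'a::metric_space \<Rightarrow> 'a set \<Rightarrow> real" where
  "dist_set x A = (if A = {} then 0 else Min ((\<lambda>a. dist x a) ` A))"

definition tour_cost :: "'a::metric_space \<Rightarrow> 'a list \<Rightarrow> real" where
  "tour_cost Dp ys = dist Dp (ys ! 0) + (\<Sum>j<length ys - 1. dist (ys ! j) (ys ! (j + 1)))
      + dist (ys ! (length ys - 1)) Dp"

end

theory Submission
  imports Defs
begin

lemma path_nn:
  fixes q :: "nat \<Rightarrow> 'a::metric_space"
  assumes inj: "inj_on q {..<n}" and j: "Suc j < n"
  shows "(\<Sum>w\<in>q`{..<n}. dist_set w (q`{..<n} - {w}))
     \<le> (\<Sum>i<n-1. dist (q i) (q (Suc i))) + dist (q j) (q (Suc j))"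
proof -
  define g where "g i = (if i \<le> j then Suc i else i - 1)" for i
  define d where "d i = dist (q i) (q (Suc i))" for i
  have "(\<Sum>w\<in>q`{..<n}. dist_set w (q`{..<n} - {w})) = (\<Sum>i<n. dist_set (q i) (q`{..<n} - {q i}))"
    by (rule sum.reindex[OF inj, unfolded comp_def])
  also have "\<dots> \<le> (\<Sum>i<n. dist (q i) (q (g i)))"
  proof (rule sum_mono)
    fix i assume i: "i \<in> {..<n}"
    have gi: "g i < n" "g i \<noteq> i" using i j by (auto simp: g_def)
    have "q (g i) \<noteq> q i" using inj gi i by (auto dest: inj_onD)
    hence "q (g i) \<in> q`{..<n} - {q i}" using gi by auto
    thus "dist_set (q i) (q`{..<n} - {q i}) \<le> dist (q i) (q (g i))"
      unfolding dist_set_def by (auto intro!: Min_le)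
  qed
  also have "(\<Sum>i<n. dist (q i) (q (g i))) = (\<Sum>i<n-1. d i) + d j"
  proof -
    have s1: "{..<n} = {0..<Suc j} \<union> {Suc j..<n}" using j by auto
    have "(\<Sum>i<n. dist (q i) (q (g i))) = (\<Sum>i\<in>{0..<Suc j}. dist (q i) (q (g i))) + (\<Sum>i\<in>{Suc j..<n}. dist (q i) (q (g i)))"
      unfolding s1 by (rule sum.union_disjoint) auto
    also have "(\<Sum>i\<in>{0..<Suc j}. dist (q i) (q (g i))) = (\<Sum>i\<in>{0..<Suc j}. d i)"
      by (rule sum.cong) (auto simp: g_def d_def)
    also have "(\<Sum>i\<in>{Suc j..<n}. dist (q i) (q (g i))) = (\<Sum>i\<in>{Suc j..<n}. d (i - 1))"
      by (rule sum.cong) (auto simp: g_def d_def dist_commute)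
    also have "\<dots> = (\<Sum>i\<in>{j..<n-1}. d i)"
    proof -
      obtain n' where n': "n = Suc n'" using j by (cases n) auto
      show ?thesis unfolding n' using sum.shift_bounds_Suc_ivl[of "\<lambda>i. d (i - 1)" j n'] by simp
    qed
    also have "(\<Sum>i\<in>{0..<Suc j}. d i) = (\<Sum>i\<in>{0..<j}. d i) + d j" by simp
    also have "(\<Sum>i\<in>{0..<j}. d i) + d j + (\<Sum>i\<in>{j..<n-1}. d i) = (\<Sum>i\<in>{0..<n-1}. d i) + d j"
      using sum.atLeastLessThan_concat[of 0 j "n-1" d] j by simp
    finally show ?thesis by (simp add: atLeast0LessThan)
  qed
  finally show ?thesis unfolding d_def .
qed

lemma tri_path:
  fixes p :: "nat \<Rightarrow> 'a::metric_space"
  shows "a \<le> b \<Longrightarrow> dist (p a) (p b) \<le> (\<Sum>j\<in>{a..<b}. dist (p j) (p (Suc j)))"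
proof (induction b)
  case 0 then show ?case by simp
next
  case (Suc b)
  show ?case
  proof (cases "a = Suc b")
    case True then show ?thesis by simp
  next
    case False
    hence ab: "a \<le> b" using Suc by simp
    have "dist (p a) (p (Suc b)) \<le> dist (p a) (p b) + dist (p b) (p (Suc b))" by (rule dist_triangle)
    also have "\<dots> \<le> (\<Sum>j\<in>{a..<b}. dist (p j) (p (Suc j))) + dist (p b) (p (Suc b))"
      using Suc.IH ab by simp
    finally show ?thesis using ab by simp
  qed
qed

lemma chain_path:
  fixes p :: "nat \<Rightarrow> 'a::metric_space"
  assumes "\<forall>i<s. g i \<le> g (Suc i)"
  shows "(\<Sum>i<s. dist (p (g i)) (p (g (Suc i)))) \<le> (\<Sum>j\<in>{g 0..<g s}. dist (p j) (p (Suc j)))"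
  using assms
proof (induction s)
  case 0 then show ?case by simp
next
  case (Suc s)
  have m: "g 0 \<le> g s"
  proof -
    have "\<forall>k\<le>s. g 0 \<le> g k"
    proof (intro allI impI)
      fix k assume "k \<le> s" thus "g 0 \<le> g k"
        using Suc.prems by (induction k) (auto intro: order_trans)
    qed
    thus ?thesis by simp
  qed
  have "(\<Sum>i<Suc s. dist (p (g i)) (p (g (Suc i)))) = (\<Sum>i<s. dist (p (g i)) (p (g (Suc i)))) + dist (p (g s)) (p (g (Suc s)))" by simp
  also have "\<dots> \<le> (\<Sum>j\<in>{g 0..<g s}. dist (p j) (p (Suc j))) + (\<Sum>j\<in>{g s..<g (Suc s)}. dist (p j) (p (Suc j)))"
    using Suc tri_path[of "g s" "g (Suc s)" p] by (intro add_mono) auto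
  also have "\<dots> = (\<Sum>j\<in>{g 0..<g (Suc s)}. dist (p j) (p (Suc j)))"
    using sum.atLeastLessThan_concat[OF m, of "g (Suc s)"] Suc.prems by simp
  finally show ?case .
qed


lemma count_far:
  fixes l :: "nat \<Rightarrow> real" and m :: nat and mu L Delta t :: real
  assumes m: "m \<ge> 1" and mu: "0 < mu" "mu < 1"
    and L: "L = (\<Sum>j<m. l j) / real m"
    and Dl: "\<And>j. j < m \<Longrightarrow> l j \<le> L + Delta" and D0: "Delta \<ge> 0"
    and t: "t = L - mu / (1 - mu) * Delta"
  shows "real (card {j. j < m \<and> t \<le> l j}) > mu * real m"
proof -
  define J where "J = {j. j < m \<and> t \<le> l j}"
  define A where "A = {j. j < m \<and> l j < t}"
  define r where "r = card J"
  have fin: "finite J" "finite A" unfolding J_def A_def by auto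
  have U: "{..<m} = A \<union> J" and dis: "A \<inter> J = {}" unfolding J_def A_def by auto
  have cardA: "card A = m - r"
  proof -
    have "card {..<m} = card A + card J" unfolding U using fin dis by (simp add: card_Un_disjoint)
    thus ?thesis unfolding r_def by simp
  qed
  have rm: "r \<le> m" unfolding r_def J_def by (rule order_trans[OF card_mono[of "{..<m}"]]) auto
  have sumeq: "(\<Sum>j<m. l j) = real m * L" using L m by simp
  have sJ: "(\<Sum>j\<in>J. l j) \<le> real r * (L + Delta)"
    using sum_mono[of J l "\<lambda>_. L + Delta"] Dl unfolding r_def J_def by auto
  show ?thesis
  proof (cases "A = {}")
    case True
    hence "r = m" using cardA rm by simp
    thus ?thesis using mu m unfolding r_def J_def by simp
  next
    case False
    have sA: "(\<Sum>j\<in>A. l j) < (\<Sum>j\<in>A. t)"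
      by (rule sum_strict_mono[OF fin(2) False]) (auto simp: A_def)
    have "(\<Sum>j<m. l j) = (\<Sum>j\<in>A. l j) + (\<Sum>j\<in>J. l j)"
      unfolding U using fin dis by (simp add: sum.union_disjoint)
    hence "real m * L < real (m - r) * t + real r * (L + Delta)"
      using sA sJ sumeq cardA by simp
    hence key: "real m * L < (real m - real r) * t + real r * (L + Delta)"
      using rm by (simp add: of_nat_diff)
    define c where "c = mu / (1 - mu)"
    have c0: "c > 0" using mu unfolding c_def by simp
    have "0 < Delta * (real r - (real m - real r) * c)"
      using key unfolding t c_def[symmetric] by (simp add: algebra_simps)
    hence "Delta > 0" "real r - (real m - real r) * c > 0"
      using D0 by (auto simp: zero_less_mult_iff)
    hence "(real m - real r) * c < real r" by simp
    hence "(real m - real r) * mu < real r * (1 - mu)"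
      using mu unfolding c_def by (simp add: field_simps)
    thus ?thesis unfolding r_def J_def by (simp add: algebra_simps)
  qed
qed


theorem lemma9:
  fixes Dp :: "'a::metric_space" and ys :: "'a list" and lam eps :: real
  assumes "lam > 0" and "eps > 0" and "lam + eps < 1"
    and "length ys \<ge> 1" and "distinct ys"
  defines "m \<equiv> length ys"
  defines "L \<equiv> (\<Sum>j<m. dist Dp (ys ! j)) / real m"
  defines "Delta \<equiv> Max ((\<lambda>j. dist Dp (ys ! j)) ` {..<m}) - L"
  shows "\<exists>W. W \<subseteq> set ys \<and> real (card W) > (lam + eps) * real m - 1 \<and>
    tour_cost Dp ys \<ge> 2 * (L - (lam + eps) / (1 - lam - eps) * Delta)
                      + (\<Sum>x\<in>W. dist_set x (W - {x}))"
proof -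
  define mu where "mu = lam + eps"
  define l where "l j = dist Dp (ys ! j)" for j
  define t where "t = L - mu / (1 - mu) * Delta"
  have m1: "m \<ge> 1" using assms(4) unfolding m_def .
  have mu: "0 < mu" "mu < 1" using assms(1-3) unfolding mu_def by auto
  have Dl: "l j \<le> L + Delta" if "j < m" for j
    unfolding Delta_def l_def using that by (auto intro!: Max_ge)
  have D0: "Delta \<ge> 0"
  proof -
    have "(\<Sum>j<m. l j) \<le> (\<Sum>j<m. L + Delta)" by (rule sum_mono) (use Dl in auto)
    hence "real m * L \<le> real m * (L + Delta)" using m1 unfolding L_def l_def by simp
    thus ?thesis using m1 by simp
  qed
  define J where "J = {j. j < m \<and> t \<le> l j}"
  define r where "r = card J"
  have rgt: "real r > mu * real m"
    unfolding r_def J_def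
    by (rule count_far[OF m1 mu _ Dl D0 t_def]) (simp add: L_def l_def)
  have r1: "r \<ge> 1"
  proof (rule ccontr)
    assume "\<not> r \<ge> 1"
    hence "r = 0" by simp
    moreover have "mu * real m \<ge> 0" using mu by simp
    ultimately show False using rgt by simp
  qed
  have finJ: "finite J" unfolding J_def by auto
  obtain xs where xs: "sorted_wrt (<) xs" "set xs = J"
    using finite_set_strict_sorted[OF finJ] by blast
  have dxs: "distinct xs" using xs(1) strict_sorted_iff by blast
  have lxs: "length xs = r" unfolding r_def using distinct_card[OF dxs] xs(2) by simp
  define f where "f i = xs ! i" for i
  have fJ: "f i < m" "t \<le> l (f i)" if "i < r" for i
    using that xs(2) lxs nth_mem[of i xs] unfolding f_def J_def by auto
  have fmono: "f i < f k" if "i < k" "k < r" for i k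
    using sorted_wrt_nth_less[OF xs(1) that[unfolded lxs[symmetric]]] unfolding f_def .
  define y where "y i = ys ! f i" for i
  have yinj: "y i = y k \<longleftrightarrow> i = k" if "i < r" "k < r" for i k
  proof -
    have "y i = y k \<longleftrightarrow> f i = f k" unfolding y_def
      using nth_eq_iff_index_eq[OF assms(5)] fJ(1) that unfolding m_def by blast
    also have "\<dots> \<longleftrightarrow> i = k" unfolding f_def
      using nth_eq_iff_index_eq[OF dxs] that lxs by simp
    finally show ?thesis .
  qed
  define d where "d i = dist (y i) (y (Suc i))" for i
  define DD where "DD = (\<Sum>i<r-1. d i)"
  define p where "p j = (if j = 0 \<or> m < j then Dp else ys ! (j - 1))" for j
  have cost: "tour_cost Dp ys = (\<Sum>j<Suc m. dist (p j) (p (Suc j)))"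
  proof -
    obtain m' where m': "m = Suc m'" using m1 by (cases m) auto
    have "(\<Sum>j<Suc m. dist (p j) (p (Suc j))) = dist (p 0) (p 1) + (\<Sum>j<m'. dist (p (Suc j)) (p (Suc (Suc j)))) + dist (p m) (p (Suc m))"
      unfolding sum.lessThan_Suc_shift[of _ m] unfolding m' sum.lessThan_Suc[of _ m'] by simp
    also have "(\<Sum>j<m'. dist (p (Suc j)) (p (Suc (Suc j)))) = (\<Sum>j<m'. dist (ys ! j) (ys ! (j+1)))"
      by (rule sum.cong) (auto simp: p_def m')
    finally show ?thesis unfolding tour_cost_def using m' by (simp add: p_def m_def[symmetric])
  qed
  define g where "g i = (if i = 0 then 0 else if i \<le> r then Suc (f (i - 1)) else Suc m)" for i
  have gmono: "\<forall>i<Suc r. g i \<le> g (Suc i)"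
  proof (intro allI impI)
    fix i assume i: "i < Suc r"
    show "g i \<le> g (Suc i)"
    proof (cases "i = 0")
      case True thus ?thesis by (simp add: g_def)
    next
      case False
      show ?thesis
      proof (cases "Suc i \<le> r")
        case True
        thus ?thesis using False fmono[of "i - 1" i] by (simp add: g_def)
      next
        case False
        have "i - 1 < r" using i \<open>i \<noteq> 0\<close> by simp
        thus ?thesis using False \<open>i \<noteq> 0\<close> i fJ(1)[of "i - 1"] by (simp add: g_def)
      qed
    qed
  qed
  have chain: "(\<Sum>i<Suc r. dist (p (g i)) (p (g (Suc i)))) \<le> tour_cost Dp ys"
  proof -
    have "(\<Sum>i<Suc r. dist (p (g i)) (p (g (Suc i)))) \<le> (\<Sum>j\<in>{g 0..<g (Suc r)}. dist (p j) (p (Suc j)))"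
      by (rule chain_path[OF gmono])
    also have "\<dots> = (\<Sum>j<Suc m. dist (p j) (p (Suc j)))" by (simp add: g_def atLeast0LessThan)
    finally show ?thesis using cost by simp
  qed
  have lhs: "(\<Sum>i<Suc r. dist (p (g i)) (p (g (Suc i)))) = l (f 0) + DD + l (f (r - 1))"
  proof -
    obtain r' where r': "r = Suc r'" using r1 by (cases r) auto
    have "(\<Sum>i<Suc r. dist (p (g i)) (p (g (Suc i)))) = dist (p (g 0)) (p (g 1)) + (\<Sum>i<r'. dist (p (g (Suc i))) (p (g (Suc (Suc i))))) + dist (p (g r)) (p (g (Suc r)))"
      unfolding sum.lessThan_Suc_shift[of _ r] unfolding r' sum.lessThan_Suc[of _ r'] by simp
    also have "dist (p (g 0)) (p (g 1)) = l (f 0)"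
      using fJ(1)[of 0] r' by (simp add: g_def p_def l_def)
    also have "dist (p (g r)) (p (g (Suc r))) = l (f (r - 1))"
      using fJ(1)[of "r - 1"] r' by (simp add: g_def p_def l_def dist_commute)
    also have "(\<Sum>i<r'. dist (p (g (Suc i))) (p (g (Suc (Suc i))))) = DD"
    proof -
      have "DD = (\<Sum>i<r'. d i)" unfolding DD_def r' by simp
      moreover have "(\<Sum>i<r'. dist (p (g (Suc i))) (p (g (Suc (Suc i))))) = (\<Sum>i<r'. d i)"
      proof (rule sum.cong[OF refl])
      fix x assume "x \<in> {..<r'}"
      hence "f x < m" "f (Suc x) < m" using fJ(1)[of x] fJ(1)[of "Suc x"] r' by auto
      thus "dist (p (g (Suc x))) (p (g (Suc (Suc x)))) = d x"
        using \<open>x \<in> {..<r'}\<close> r' by (auto simp: g_def p_def d_def y_def)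
      qed
      ultimately show ?thesis by simp
    qed
    finally show ?thesis .
  qed
  have costb: "tour_cost Dp ys \<ge> 2 * t + DD"
    using chain lhs fJ(2)[of 0] fJ(2)[of "r - 1"] r1 by simp
  have dnn: "d i \<ge> 0" for i unfolding d_def by simp
  have "\<exists>W. W \<subseteq> set ys \<and> card W = r - 1 \<and> (\<Sum>x\<in>W. dist_set x (W - {x})) \<le> DD"
  proof -
    have yset: "y i \<in> set ys" if "i < r" for i
      using fJ(1)[OF that] unfolding y_def m_def by simp
    consider "r = 1" | "r = 2" | "r \<ge> 3" using r1 by linarith
    thus ?thesis
    proof cases
      case 1 thus ?thesis by (intro exI[of _ "{}"]) (simp add: DD_def)
    next
      case 2 thus ?thesis using yset[of 0]
        by (intro exI[of _ "{y 0}"]) (simp add: DD_def dist_set_def dnn)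
    next
      case 3
      show ?thesis
      proof (cases "\<exists>j<r-2. d j \<le> d (r - 2)")
        case True
        then obtain j where j: "j < r - 2" "d j \<le> d (r-2)" by blast
        have inj: "inj_on y {..<r-1}" by (rule inj_onI) (use yinj in auto)
        have "(\<Sum>w\<in>y`{..<r-1}. dist_set w (y`{..<r-1} - {w})) \<le> (\<Sum>i<r-1-1. d i) + d j"
          using path_nn[OF inj, of j] j unfolding d_def by simp
        also have "\<dots> \<le> (\<Sum>i<r-2. d i) + d (r - 2)" using j by (simp add: numeral_2_eq_2)
        also have "\<dots> = DD"
        proof -
          obtain k where k: "r = Suc (Suc k)" using 3 by (cases r; cases "r - 1") auto
          show ?thesis unfolding DD_def k by simp
        qed
        finally show ?thesis using yset card_image[OF inj]
          by (intro exI[of _ "y`{..<r-1}"]) auto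
      next
        case False
        hence dlt: "d (r - 2) < d 0" using 3 by force
        define z where "z i = y (Suc i)" for i
        have inj: "inj_on z {..<r-1}" unfolding z_def by (rule inj_onI) (use yinj in auto)
        have "(\<Sum>w\<in>z`{..<r-1}. dist_set w (z`{..<r-1} - {w})) \<le> (\<Sum>i<r-1-1. dist (z i) (z (Suc i))) + dist (z (r-3)) (z (Suc (r-3)))"
          using path_nn[OF inj, of "r-3"] 3 by simp
        also have "\<dots> = (\<Sum>i<r-2. d (Suc i)) + d (r - 2)"
          using 3 unfolding z_def d_def by (simp add: numeral_eq_Suc Suc_diff_Suc)
        also have "\<dots> \<le> (\<Sum>i<r-2. d (Suc i)) + d 0" using dlt by simp
        also have "\<dots> = DD"
        proof -
          obtain k where k: "r = Suc (Suc k)" using 3 by (cases r; cases "r - 1") auto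
          show ?thesis unfolding DD_def k using sum.lessThan_Suc_shift[of d k] by (simp add: add.commute)
        qed
        finally show ?thesis using yset card_image[OF inj]
          by (intro exI[of _ "z`{..<r-1}"]) (auto simp: z_def)
      qed
    qed
  qed
  then obtain W where W: "W \<subseteq> set ys" "card W = r - 1" "(\<Sum>x\<in>W. dist_set x (W - {x})) \<le> DD" by blast
  have "real (card W) > mu * real m - 1" using W(2) rgt r1 by (simp add: of_nat_diff)
  moreover have "tour_cost Dp ys \<ge> 2 * t + (\<Sum>x\<in>W. dist_set x (W - {x}))" using costb W(3) by simp
  ultimately show ?thesis using W(1) unfolding t_def mu_def
    by (intro exI[of _ W]) (simp add: diff_diff_eq)
qed

end
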